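(* If $\gamma_*>0$ and $P[\mu_1,\mu_2]$ is a nonsingular matrix, then $\mathrm{rank}(\hat V(\gamma_* ))=2$, where $\hat V(\gamma_* )=[v_1(\gamma_* )\ \ v_2(\gamma_* )-\theta_*v_1(\gamma_* )]$ and $\theta_*=\frac{\gamma_*}{\mu_1-\mu_2}$.
   Context: Let $P(\lambda)=\sum_{j=0}^m A_j\lambda^j$ be an $n\times n$ matrix polynomial with $\det A_m\neq0$, let $\mu_1\neq\mu_2$ be complex numbers, $P[\mu_1,\mu_2]=\frac{P(\mu_1)-P(\mu_2)}{\mu_1-\mu_2}$, and $F[P(\mu_1,\mu_2);\gamma]=\begin{bmatrix} P(\mu_1) & 0\\ \gamma P[\mu_1,\mu_2] & P(\mu_2)\end{bmatrix}$. Let $\gamma_*$ be a point where $s_{2n-1}(F[P(\mu_1,\mu_2);\gamma])$ attains its maximum $s_*>0$ over $\gamma\ge0$. Let $\begin{bmatrix} u_1(\gamma_* )\\ u_2(\gamma_* )\end{bmatrix},\begin{bmatrix} v_1(\gamma_* )\\ v_2(\gamma_* )\end{bmatrix}$ ($u_k,v_k\in\mathbb{C}^n$) be a pair of left and right singular vectors of $s_*$ chosen such that $u_2(\gamma_* )^*P[\mu_1,\mu_2]v_1(\gamma_* )=0$, $u_2(\gamma_* )^*u_1(\gamma_* )=v_2(\gamma_* )^*v_1(\gamma_* )$, and $[u_1\ u_2]^*[u_1\ u_2]=[v_1\ v_2]^*[v_1\ v_2]$ at $\gamma_*$ (such a pair exists). *)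

theory Defs
  imports "Jordan_Normal_Form.Schur_Decomposition" "Jordan_Normal_Form.DL_Rank"
    "Jordan_Normal_Form.Char_Poly" "HOL-Library.Multiset"
begin

definition mpoly_eval :: "nat \<Rightarrow> (nat \<Rightarrow> complex mat) \<Rightarrow> nat \<Rightarrow> complex \<Rightarrow> complex mat" where
  "mpoly_eval n A m z = mat n n (\<lambda>(i,k). \<Sum>j\<le>m. z ^ j * A j $$ (i,k))"

definition mpoly_divdiff :: "nat \<Rightarrow> (nat \<Rightarrow> complex mat) \<Rightarrow> nat \<Rightarrow> complex \<Rightarrow> complex \<Rightarrow> complex mat" where
  "mpoly_divdiff n A m z1 z2 =
     (1 / (z1 - z2)) \<cdot>\<^sub>m (mpoly_eval n A m z1 - mpoly_eval n A m z2)"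

definition Fmat :: "nat \<Rightarrow> (nat \<Rightarrow> complex mat) \<Rightarrow> nat \<Rightarrow> complex \<Rightarrow> complex \<Rightarrow> real \<Rightarrow> complex mat" where
  "Fmat n A m z1 z2 g = four_block_mat (mpoly_eval n A m z1) (0\<^sub>m n n)
       (complex_of_real g \<cdot>\<^sub>m mpoly_divdiff n A m z1 z2) (mpoly_eval n A m z2)"

definition singular_values :: "complex mat \<Rightarrow> real list" where
  "singular_values B = rev (sorted_list_of_multiset
      (image_mset (\<lambda>z. sqrt (Re z)) (proots (char_poly (mat_adjoint B * B)))))"

definition sing_val :: "nat \<Rightarrow> complex mat \<Rightarrow> real" where
  "sing_val k B = singular_values B ! (k - 1)"

end

theory Submission
  imports Defs
begin

lemma adj_dims[simp]: "dim_row (mat_adjoint (M::complex mat)) = dim_col M" "dim_col (mat_adjoint M) = dim_row M"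
  unfolding mat_adjoint_def by simp_all

lemma adj_index[simp]: "i < dim_col M \<Longrightarrow> j < dim_row M \<Longrightarrow> mat_adjoint (M::complex mat) $$ (i,j) = cnj (M $$ (j,i))"
  unfolding mat_adjoint_def 
  apply (subst mat_of_rows_index)
    apply (simp only: length_map cols_length)
   apply assumption
  apply (simp only: nth_map cols_length cols_nth vec_index_conjugate dim_col index_col)
  apply simp
  done

lemma adj_carrier[simp]: "(M::complex mat) \<in> carrier_mat a b \<Longrightarrow> mat_adjoint M \<in> carrier_mat b a"
  unfolding carrier_mat_def by simp

lemma adj_four:
  assumes "A \<in> carrier_mat n n" "B \<in> carrier_mat n n" "C \<in> carrier_mat n n" "(D::complex mat) \<in> carrier_mat n n"
  shows "mat_adjoint (four_block_mat A B C D) = four_block_mat (mat_adjoint A) (mat_adjoint C) (mat_adjoint B) (mat_adjoint D)"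
proof -
  have d: "dim_row A = n" "dim_col A = n" "dim_row B = n" "dim_col B = n" "dim_row C = n" "dim_col C = n" 
     "dim_row D = n" "dim_col D = n" using assms by auto
  show ?thesis
  proof (rule eq_matI)
    fix i j assume i: "i < dim_row (four_block_mat (mat_adjoint A) (mat_adjoint C) (mat_adjoint B) (mat_adjoint D))"
      and j: "j < dim_col (four_block_mat (mat_adjoint A) (mat_adjoint C) (mat_adjoint B) (mat_adjoint D))"
    have i': "i < n + n" and j': "j < n + n" using i j by (simp_all add: d)
    show "mat_adjoint (four_block_mat A B C D) $$ (i, j) = four_block_mat (mat_adjoint A) (mat_adjoint C) (mat_adjoint B) (mat_adjoint D) $$ (i, j)"
      using i' j' by (simp add: d)
  qed (simp_all add: d)
qed

lemma adj_smult: "mat_adjoint (c \<cdot>\<^sub>m (M::complex mat)) = cnj c \<cdot>\<^sub>m mat_adjoint M"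
  by (rule eq_matI) simp_all

lemma adj_minus: assumes "A \<in> carrier_mat a b" "B \<in> carrier_mat a b"
  shows "mat_adjoint (A - (B::complex mat)) = mat_adjoint A - mat_adjoint B"
proof -
  have d: "dim_row A = a" "dim_col A = b" "dim_row B = a" "dim_col B = b" using assms by auto
  show ?thesis by (rule eq_matI) (simp_all add: d)
qed

lemma adj_inj:
  assumes D: "D \<in> carrier_mat n n" and d: "det (D::complex mat) \<noteq> 0" and x: "x \<in> carrier_vec n"
    and e: "mat_adjoint D *\<^sub>v x = 0\<^sub>v n"
  shows "x = 0\<^sub>v n"
proof -
  have T: "transpose_mat D \<in> carrier_mat n n" using D by auto
  have dt: "det (transpose_mat D) \<noteq> 0" using d det_transpose[OF D] by simp
  have dd: "dim_row D = n" "dim_col D = n" "dim_vec x = n" using D x by auto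
  have "transpose_mat D *\<^sub>v conjugate x = conjugate (mat_adjoint D *\<^sub>v x)"
  proof (rule eq_vecI)
    fix i assume i: "i < dim_vec (conjugate (mat_adjoint D *\<^sub>v x))"
    then have i': "i < n" by (simp add: dd)
    show "(transpose_mat D *\<^sub>v conjugate x) $ i = conjugate (mat_adjoint D *\<^sub>v x) $ i"
      using i' by (simp add: dd scalar_prod_def mult_mat_vec_def)
  qed (simp add: dd)
  also have "\<dots> = 0\<^sub>v n" using e by simp
  finally have "conjugate x = 0\<^sub>v n"
    using det_0_iff_vec_prod_zero[OF T] dt x
    by (metis carrier_vec_conjugate)
  then show ?thesis using x by (metis conjugate_zero_iff_vec conjugate_zero_vec)
qed

lemma adj_zero: "mat_adjoint (0\<^sub>m a b :: complex mat) = 0\<^sub>m b a"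
  by (rule eq_matI) simp_all

lemma csq0: assumes "x \<in> carrier_vec n" "conjugate x \<bullet> x = (0::complex)" shows "x = 0\<^sub>v n"
proof -
  have "conjugate x \<bullet> x = x \<bullet> conjugate x" by (rule comm_scalar_prod[of _ n]) (use assms in auto)
  then show ?thesis using assms conjugate_square_eq_0_vec[OF assms(1)] by simp
qed

lemma zero_vecI: "x \<in> carrier_vec n \<Longrightarrow> (\<And>i. i < n \<Longrightarrow> x $ i = 0) \<Longrightarrow> x = 0\<^sub>v n"
  by (rule eq_vecI) auto

lemma smult_mv: "A \<in> carrier_mat a b \<Longrightarrow> v \<in> carrier_vec b \<Longrightarrow> i < a \<Longrightarrow>
   ((k \<cdot>\<^sub>m A) *\<^sub>v v) $ i = k * ((A *\<^sub>v (v::complex vec)) $ i)"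
  by (simp add: scalar_prod_def sum_distrib_left mult.assoc)

lemma mv_smult: "(A::complex mat) \<in> carrier_mat a b \<Longrightarrow> v \<in> carrier_vec b \<Longrightarrow> i < a \<Longrightarrow>
   (A *\<^sub>v (k \<cdot>\<^sub>v v)) $ i = k * ((A *\<^sub>v v) $ i)"
  by (simp add: mult_mat_vec)

lemma minus_mv: "(A::complex mat) \<in> carrier_mat a b \<Longrightarrow> B \<in> carrier_mat a b \<Longrightarrow> v \<in> carrier_vec b \<Longrightarrow> i < a \<Longrightarrow>
   ((A - B) *\<^sub>v v) $ i = (A *\<^sub>v v) $ i - (B *\<^sub>v v) $ i"
  by (simp add: minus_mult_distrib_mat_vec)

lemma expand_norm:
  assumes "x \<in> carrier_vec n" "y \<in> carrier_vec n"
  shows "conjugate (y - \<alpha> \<cdot>\<^sub>v x) \<bullet> (y - \<alpha> \<cdot>\<^sub>v x) =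
     conjugate y \<bullet> y - \<alpha> * (conjugate y \<bullet> x) - cnj \<alpha> * (conjugate x \<bullet> y) + \<alpha> * cnj \<alpha> * (conjugate x \<bullet> (x::complex vec))"
  using assms by (simp add: scalar_prod_def sum_subtractf sum.distrib sum_distrib_left algebra_simps)

lemma adj_row: "i < dim_col (M::complex mat) \<Longrightarrow> row (mat_adjoint M) i = conjugate (col M i)"
  unfolding mat_adjoint_def
  apply (subst mat_of_rows_row)
    apply (simp only: length_map cols_length)
   apply (simp only: nth_map cols_length cols_nth carrier_vec_conjugate col_dim)
  apply (simp only: nth_map cols_length cols_nth)
  done

lemma gram_entry:
  assumes "i < dim_col M" "j < dim_col M"
  shows "(mat_adjoint M * M) $$ (i,j) = conjugate (col M i) \<bullet> (col M j :: complex vec)"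
  using assms by (simp add: adj_row)

theorem corollary2:
  fixes n m :: nat and A :: "nat \<Rightarrow> complex mat" and \<mu>1 \<mu>2 :: complex
    and \<gamma>s ss :: real and u1 u2 v1 v2 :: "complex vec"
  assumes n_pos: "n \<ge> 1"
    and A_dim: "\<And>j. j \<le> m \<Longrightarrow> A j \<in> carrier_mat n n"
    and lead: "det (A m) \<noteq> 0"
    and mu_ne: "\<mu>1 \<noteq> \<mu>2"
    and gs_nonneg: "\<gamma>s \<ge> 0"
    and gs_max: "\<And>\<gamma>. \<gamma> \<ge> 0 \<Longrightarrow>
        sing_val (2*n - 1) (Fmat n A m \<mu>1 \<mu>2 \<gamma>) \<le> sing_val (2*n - 1) (Fmat n A m \<mu>1 \<mu>2 \<gamma>s)"
    and ss_def: "ss = sing_val (2*n - 1) (Fmat n A m \<mu>1 \<mu>2 \<gamma>s)"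
    and ss_pos: "ss > 0"
    and dims: "u1 \<in> carrier_vec n" "u2 \<in> carrier_vec n" "v1 \<in> carrier_vec n" "v2 \<in> carrier_vec n"
    and right_sv: "Fmat n A m \<mu>1 \<mu>2 \<gamma>s *\<^sub>v (v1 @\<^sub>v v2) = complex_of_real ss \<cdot>\<^sub>v (u1 @\<^sub>v u2)"
    and left_sv: "mat_adjoint (Fmat n A m \<mu>1 \<mu>2 \<gamma>s) *\<^sub>v (u1 @\<^sub>v u2) = complex_of_real ss \<cdot>\<^sub>v (v1 @\<^sub>v v2)"
    and u_unit: "conjugate (u1 @\<^sub>v u2) \<bullet> (u1 @\<^sub>v u2) = 1"
    and v_unit: "conjugate (v1 @\<^sub>v v2) \<bullet> (v1 @\<^sub>v v2) = 1"
    and c1: "conjugate u2 \<bullet> (mpoly_divdiff n A m \<mu>1 \<mu>2 *\<^sub>v v1) = 0"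
    and c2: "conjugate u2 \<bullet> u1 = conjugate v2 \<bullet> v1"
    and c3: "mat_adjoint (mat_of_cols n [u1, u2]) * mat_of_cols n [u1, u2]
           = mat_adjoint (mat_of_cols n [v1, v2]) * mat_of_cols n [v1, v2]"
    and gs_pos: "\<gamma>s > 0"
    and nonsing: "det (mpoly_divdiff n A m \<mu>1 \<mu>2) \<noteq> 0"
  shows "vec_space.rank n
           (mat_of_cols n [v1, v2 - (complex_of_real \<gamma>s / (\<mu>1 - \<mu>2)) \<cdot>\<^sub>v v1]) = 2"
proof -
  define P1 where "P1 = mpoly_eval n A m \<mu>1"
  define P2 where "P2 = mpoly_eval n A m \<mu>2"
  define D where "D = mpoly_divdiff n A m \<mu>1 \<mu>2"
  define \<delta> where "\<delta> = \<mu>1 - \<mu>2"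
  define g where "g = complex_of_real \<gamma>s"
  define s where "s = complex_of_real ss"
  have P1c: "P1 \<in> carrier_mat n n" unfolding P1_def mpoly_eval_def by simp
  have P2c: "P2 \<in> carrier_mat n n" unfolding P2_def mpoly_eval_def by simp
  have Dc: "D \<in> carrier_mat n n" unfolding D_def mpoly_divdiff_def P1_def[symmetric] P2_def[symmetric]
    using P1c P2c by (intro smult_carrier_mat minus_carrier_mat)
  have dimsM[simp]: "dim_row P1 = n" "dim_col P1 = n" "dim_row P2 = n" "dim_col P2 = n" "dim_row D = n" "dim_col D = n"
    using P1c P2c Dc by auto
  have dimsv[simp]: "dim_vec u1 = n" "dim_vec u2 = n" "dim_vec v1 = n" "dim_vec v2 = n" using dims by auto
  have dne: "\<delta> \<noteq> 0" using mu_ne by (simp add: \<delta>_def)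
  have gne: "g \<noteq> 0" using gs_pos by (simp add: g_def)
  have PD: "P2 = P1 - \<delta> \<cdot>\<^sub>m D"
  proof (rule eq_matI)
    fix i j assume "i < dim_row (P1 - \<delta> \<cdot>\<^sub>m D)" "j < dim_col (P1 - \<delta> \<cdot>\<^sub>m D)"
    then have ij: "i < n" "j < n" using P1c Dc by auto
    show "P2 $$ (i,j) = (P1 - \<delta> \<cdot>\<^sub>m D) $$ (i,j)" using ij dne
      unfolding P1_def P2_def D_def \<delta>_def mpoly_divdiff_def mpoly_eval_def by (simp add: field_simps)
  qed (use P1c P2c Dc in auto)
  have F: "Fmat n A m \<mu>1 \<mu>2 \<gamma>s = four_block_mat P1 (0\<^sub>m n n) (g \<cdot>\<^sub>m D) P2"
    unfolding Fmat_def P1_def P2_def D_def g_def ..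
  have gDc: "g \<cdot>\<^sub>m D \<in> carrier_mat n n" using Dc by simp
  have sapp: "\<And>c x y. x \<in> carrier_vec n \<Longrightarrow> y \<in> carrier_vec n \<Longrightarrow> c \<cdot>\<^sub>v (x @\<^sub>v y) = (c \<cdot>\<^sub>v x) @\<^sub>v (c \<cdot>\<^sub>v (y::complex vec))"
    by (rule eq_vecI) auto
  have Rapp: "(P1 *\<^sub>v v1 + 0\<^sub>m n n *\<^sub>v v2) @\<^sub>v ((g \<cdot>\<^sub>m D) *\<^sub>v v1 + P2 *\<^sub>v v2) = (s \<cdot>\<^sub>v u1) @\<^sub>v (s \<cdot>\<^sub>v u2)"
    using right_sv unfolding F s_def[symmetric]
    by (simp add: four_block_mat_mult_vec[OF P1c _ gDc P2c dims(3,4)] sapp dims)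
  have R1: "P1 *\<^sub>v v1 + 0\<^sub>m n n *\<^sub>v v2 = s \<cdot>\<^sub>v u1" and R2: "(g \<cdot>\<^sub>m D) *\<^sub>v v1 + P2 *\<^sub>v v2 = s \<cdot>\<^sub>v u2"
  proof -
    have c1: "P1 *\<^sub>v v1 + 0\<^sub>m n n *\<^sub>v v2 \<in> carrier_vec n" using P1c dims by (meson add_carrier_vec mult_mat_vec_carrier zero_carrier_mat)
    have c2: "s \<cdot>\<^sub>v u1 \<in> carrier_vec n" using dims by simp
    show "P1 *\<^sub>v v1 + 0\<^sub>m n n *\<^sub>v v2 = s \<cdot>\<^sub>v u1" "(g \<cdot>\<^sub>m D) *\<^sub>v v1 + P2 *\<^sub>v v2 = s \<cdot>\<^sub>v u2"
      using append_vec_eq[OF c1 c2] Rapp by auto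
  qed
  have R1i: "(P1 *\<^sub>v v1) $ i = s * u1 $ i" if "i < n" for i
    using arg_cong[OF R1, of "\<lambda>v. v $ i"] that P1c dims by simp
  have R2i: "g * (D *\<^sub>v v1) $ i + (P2 *\<^sub>v v2) $ i = s * u2 $ i" if "i < n" for i
    using arg_cong[OF R2, of "\<lambda>v. v $ i"] that P2c dims smult_mv[OF Dc dims(3) that] by simp
  have aDc: "mat_adjoint D \<in> carrier_mat n n" using Dc by simp
  have aP1c: "mat_adjoint P1 \<in> carrier_mat n n" using P1c by simp
  have aP2c: "mat_adjoint P2 \<in> carrier_mat n n" using P2c by simp
  have agD: "mat_adjoint (g \<cdot>\<^sub>m D) = g \<cdot>\<^sub>m mat_adjoint D" unfolding adj_smult by (simp add: g_def)
  have agDc: "g \<cdot>\<^sub>m mat_adjoint D \<in> carrier_mat n n" using aDc by simp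
  have aPD: "mat_adjoint P2 = mat_adjoint P1 - cnj \<delta> \<cdot>\<^sub>m mat_adjoint D"
    unfolding PD by (subst adj_minus[OF P1c]) (simp_all add: Dc adj_smult)
  have aF: "mat_adjoint (Fmat n A m \<mu>1 \<mu>2 \<gamma>s) = four_block_mat (mat_adjoint P1) (g \<cdot>\<^sub>m mat_adjoint D) (0\<^sub>m n n) (mat_adjoint P2)"
    unfolding F by (subst adj_four[OF P1c _ gDc P2c]) (simp_all add: agD adj_zero)
  have Lapp: "(mat_adjoint P1 *\<^sub>v u1 + (g \<cdot>\<^sub>m mat_adjoint D) *\<^sub>v u2) @\<^sub>v (0\<^sub>m n n *\<^sub>v u1 + mat_adjoint P2 *\<^sub>v u2) = (s \<cdot>\<^sub>v v1) @\<^sub>v (s \<cdot>\<^sub>v v2)"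
    using left_sv unfolding aF s_def[symmetric]
    by (simp add: four_block_mat_mult_vec[OF aP1c agDc _ aP2c dims(1,2)] sapp dims)
  have L1: "mat_adjoint P1 *\<^sub>v u1 + (g \<cdot>\<^sub>m mat_adjoint D) *\<^sub>v u2 = s \<cdot>\<^sub>v v1" and L2: "0\<^sub>m n n *\<^sub>v u1 + mat_adjoint P2 *\<^sub>v u2 = s \<cdot>\<^sub>v v2"
  proof -
    have c1: "mat_adjoint P1 *\<^sub>v u1 + (g \<cdot>\<^sub>m mat_adjoint D) *\<^sub>v u2 \<in> carrier_vec n" using aP1c agDc dims by (meson add_carrier_vec mult_mat_vec_carrier)
    have c2: "s \<cdot>\<^sub>v v1 \<in> carrier_vec n" using dims by simp
    show "mat_adjoint P1 *\<^sub>v u1 + (g \<cdot>\<^sub>m mat_adjoint D) *\<^sub>v u2 = s \<cdot>\<^sub>v v1" "0\<^sub>m n n *\<^sub>v u1 + mat_adjoint P2 *\<^sub>v u2 = s \<cdot>\<^sub>v v2"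
      using append_vec_eq[OF c1 c2] Lapp by auto
  qed
  have L1i: "(mat_adjoint P1 *\<^sub>v u1) $ i + g * (mat_adjoint D *\<^sub>v u2) $ i = s * v1 $ i" if "i < n" for i
    using arg_cong[OF L1, of "\<lambda>v. v $ i"] that aP1c dims smult_mv[OF aDc dims(2) that] by simp
  have L2i: "(mat_adjoint P2 *\<^sub>v u2) $ i = s * v2 $ i" if "i < n" for i
    using arg_cong[OF L2, of "\<lambda>v. v $ i"] that aP2c dims by simp
  have Gm: "conjugate x \<bullet> y = conjugate x' \<bullet> y'" if "c3'": "mat_adjoint (mat_of_cols n [u1, u2]) * mat_of_cols n [u1, u2]
           = mat_adjoint (mat_of_cols n [v1, v2]) * mat_of_cols n [v1, v2]"
     and ij: "i < 2" "j < 2" and xs: "x = [u1,u2] ! i" "y = [u1,u2] ! j" "x' = [v1,v2] ! i" "y' = [v1,v2] ! j" for i j x y x' y'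
  proof -
    have "(mat_adjoint (mat_of_cols n [u1, u2]) * mat_of_cols n [u1, u2]) $$ (i,j) = 
       (mat_adjoint (mat_of_cols n [v1, v2]) * mat_of_cols n [v1, v2]) $$ (i,j)" using c3' by simp
    moreover have "\<And>k w1 w2. k < 2 \<Longrightarrow> w1 \<in> carrier_vec n \<Longrightarrow> w2 \<in> carrier_vec n \<Longrightarrow> col (mat_of_cols n [w1,w2]) k = [w1,w2] ! k"
      by (rule col_mat_of_cols) (auto simp: less_2_cases_iff)
    ultimately have "conjugate (col (mat_of_cols n [u1, u2]) i) \<bullet> col (mat_of_cols n [u1, u2]) j =
      conjugate (col (mat_of_cols n [v1, v2]) i) \<bullet> col (mat_of_cols n [v1, v2]) j"
      using ij by (simp add: adj_row)
    moreover note cc = \<open>\<And>k w1 w2. k < 2 \<Longrightarrow> w1 \<in> carrier_vec n \<Longrightarrow> w2 \<in> carrier_vec n \<Longrightarrow> col (mat_of_cols n [w1,w2]) k = [w1,w2] ! k\<close>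
    ultimately show ?thesis using cc[OF ij(1) dims(1,2)] cc[OF ij(2) dims(1,2)] cc[OF ij(1) dims(3,4)] cc[OF ij(2) dims(3,4)] xs
      by simp
  qed
  have G00: "conjugate u1 \<bullet> u1 = conjugate v1 \<bullet> v1" using Gm[OF c3, of 0 0] by simp
  have G01: "conjugate u1 \<bullet> u2 = conjugate v1 \<bullet> v2" using Gm[OF c3, of 0 1] by simp
  have G10: "conjugate u2 \<bullet> u1 = conjugate v2 \<bullet> v1" using Gm[OF c3, of 1 0] by simp
  have G11: "conjugate u2 \<bullet> u2 = conjugate v2 \<bullet> v2" using Gm[OF c3, of 1 1] by simp
  have u0: False if "u1 = 0\<^sub>v n" "u2 = 0\<^sub>v n"
  proof -
    have "0\<^sub>v n @\<^sub>v 0\<^sub>v n = (0\<^sub>v (n+n) :: complex vec)" by (rule eq_vecI) auto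
    then show False using u_unit that by simp
  qed
  have Dinj: "x = 0\<^sub>v n" if "x \<in> carrier_vec n" "D *\<^sub>v x = 0\<^sub>v n" for x
    using det_0_iff_vec_prod_zero[OF Dc] nonsing that unfolding D_def[symmetric] by blast
  have aDinj: "x = 0\<^sub>v n" if "x \<in> carrier_vec n" "mat_adjoint D *\<^sub>v x = 0\<^sub>v n" for x
    using adj_inj[OF Dc _ that] nonsing unfolding D_def[symmetric] by blast
  have caseA: False if v10: "v1 = 0\<^sub>v n"
  proof -
    have "conjugate u1 \<bullet> u1 = 0" using G00 v10 by simp
    then have u10: "u1 = 0\<^sub>v n" using csq0 dims(1) by blast
    have "(mat_adjoint D *\<^sub>v u2) $ i = 0" if i: "i < n" for i
    proof -
      have "row (mat_adjoint P1) i \<in> carrier_vec n" using aP1c i by auto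
      then have "(mat_adjoint P1 *\<^sub>v u1) $ i = 0" using u10 i by simp
      moreover have "v1 $ i = 0" using v10 i by simp
      ultimately have "g * (mat_adjoint D *\<^sub>v u2) $ i = 0" using L1i[OF i] by simp
      then show ?thesis using gne by simp
    qed
    then have "mat_adjoint D *\<^sub>v u2 = 0\<^sub>v n" using aDc dims by (intro zero_vecI) auto
    then have "u2 = 0\<^sub>v n" using aDinj dims by blast
    then show False using u0 u10 by blast
  qed
  have caseB: False if v2a: "\<And>i. i < n \<Longrightarrow> v2 $ i = \<alpha> * v1 $ i" for \<alpha>
  proof -
    have v2e: "v2 = \<alpha> \<cdot>\<^sub>v v1" using v2a dims by (intro eq_vecI) auto
    have "conjugate (v2 - \<alpha> \<cdot>\<^sub>v v1) \<bullet> (v2 - \<alpha> \<cdot>\<^sub>v v1) = 0"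
    proof -
      have "v2 - \<alpha> \<cdot>\<^sub>v v1 = 0\<^sub>v n" using v2a dims by (intro zero_vecI) auto
      then show ?thesis by simp
    qed
    moreover have "conjugate (u2 - \<alpha> \<cdot>\<^sub>v u1) \<bullet> (u2 - \<alpha> \<cdot>\<^sub>v u1) = conjugate (v2 - \<alpha> \<cdot>\<^sub>v v1) \<bullet> (v2 - \<alpha> \<cdot>\<^sub>v v1)"
      unfolding expand_norm[OF dims(1,2)] expand_norm[OF dims(3,4)] G00 G01 G10 G11 by (rule refl)
    ultimately have "conjugate (u2 - \<alpha> \<cdot>\<^sub>v u1) \<bullet> (u2 - \<alpha> \<cdot>\<^sub>v u1) = 0" by simp
    moreover have "u2 - \<alpha> \<cdot>\<^sub>v u1 \<in> carrier_vec n" using dims by simp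
    ultimately have "u2 - \<alpha> \<cdot>\<^sub>v u1 = 0\<^sub>v n" using csq0 by blast
    note uz = this
    have u2a: "u2 $ i = \<alpha> * u1 $ i" if "i < n" for i
    proof -
      have "(u2 - \<alpha> \<cdot>\<^sub>v u1) $ i = 0" using that by (simp only: uz index_zero_vec)
      moreover have "(u2 - \<alpha> \<cdot>\<^sub>v u1) $ i = u2 $ i - \<alpha> * u1 $ i" using that dims by simp
      ultimately show ?thesis by simp
    qed
    have u2e: "u2 = \<alpha> \<cdot>\<^sub>v u1" using u2a dims by (intro eq_vecI) auto
    have v1n: "v1 \<noteq> 0\<^sub>v n" using caseA by blast
    have d0: "(g - \<alpha> * \<delta>) * (D *\<^sub>v v1) $ i = 0" if i: "i < n" for i
    proof -
      have "(P2 *\<^sub>v v2) $ i = \<alpha> * ((P1 *\<^sub>v v1) $ i - \<delta> * (D *\<^sub>v v1) $ i)"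
        unfolding v2e mv_smult[OF P2c dims(3) i] unfolding PD
        using minus_mv[OF P1c _ dims(3) i, of "\<delta> \<cdot>\<^sub>m D"] smult_mv[OF Dc dims(3) i] Dc by simp
      then have e1: "g * (D *\<^sub>v v1) $ i + \<alpha> * ((P1 *\<^sub>v v1) $ i - \<delta> * (D *\<^sub>v v1) $ i) = s * u2 $ i"
        using R2i[OF i] by simp
      have "(g - \<alpha> * \<delta>) * (D *\<^sub>v v1) $ i
          = (g * (D *\<^sub>v v1) $ i + \<alpha> * ((P1 *\<^sub>v v1) $ i - \<delta> * (D *\<^sub>v v1) $ i)) - \<alpha> * (P1 *\<^sub>v v1) $ i"
        by (simp add: algebra_simps)
      also have "\<dots> = s * u2 $ i - \<alpha> * (s * u1 $ i)" by (subst e1, subst R1i[OF i], rule refl)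
      also have "\<dots> = 0" using u2a[OF i] by simp
      finally show ?thesis .
    qed
    have ga: "g = \<alpha> * \<delta>"
    proof (rule ccontr)
      assume "g \<noteq> \<alpha> * \<delta>"
      then have "(D *\<^sub>v v1) $ i = 0" if "i < n" for i using d0[OF that] by simp
      moreover have "D *\<^sub>v v1 \<in> carrier_vec n" using Dc dims by simp
      ultimately have "D *\<^sub>v v1 = 0\<^sub>v n" using zero_vecI by blast
      then show False using Dinj[OF dims(3)] v1n by simp
    qed
    have ane: "\<alpha> \<noteq> 0" using ga gne by auto
    have cne: "g * \<alpha> + cnj \<delta> \<noteq> 0"
    proof
      assume h: "g * \<alpha> + cnj \<delta> = 0"
      have "\<delta> * (g * \<alpha> + cnj \<delta>) = g * g + \<delta> * cnj \<delta>" using ga by (simp add: algebra_simps)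
      also have "\<dots> = complex_of_real (\<gamma>s * \<gamma>s + (cmod \<delta>)^2)" by (simp add: g_def complex_norm_square[of \<delta>, symmetric])
      finally have "\<gamma>s * \<gamma>s + (cmod \<delta>)^2 = 0" using h by (metis mult_zero_right of_real_eq_0_iff)
      moreover have "\<gamma>s * \<gamma>s > 0" using gs_pos by simp
      ultimately show False by (metis add_pos_nonneg zero_le_power2 less_irrefl)
    qed
    have e0: "(mat_adjoint D *\<^sub>v u1) $ i = 0" if i: "i < n" for i
    proof -
      have a2: "(mat_adjoint P2 *\<^sub>v u2) $ i = \<alpha> * ((mat_adjoint P1 *\<^sub>v u1) $ i - cnj \<delta> * (mat_adjoint D *\<^sub>v u1) $ i)"
        unfolding u2e mv_smult[OF aP2c dims(1) i] unfolding aPD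
        using minus_mv[OF aP1c _ dims(1) i, of "cnj \<delta> \<cdot>\<^sub>m mat_adjoint D"] smult_mv[OF aDc dims(1) i] aDc by simp
      have a1: "(mat_adjoint D *\<^sub>v u2) $ i = \<alpha> * (mat_adjoint D *\<^sub>v u1) $ i"
        unfolding u2e by (rule mv_smult[OF aDc dims(1) i])
      have "\<alpha> * ((mat_adjoint P1 *\<^sub>v u1) $ i - cnj \<delta> * (mat_adjoint D *\<^sub>v u1) $ i) = \<alpha> * (s * v1 $ i)"
        using L2i[OF i] a2 v2a[OF i] by simp
      then have h2: "(mat_adjoint P1 *\<^sub>v u1) $ i - cnj \<delta> * (mat_adjoint D *\<^sub>v u1) $ i = s * v1 $ i"
        using ane by simp
      have h1: "(mat_adjoint P1 *\<^sub>v u1) $ i + g * \<alpha> * (mat_adjoint D *\<^sub>v u1) $ i = s * v1 $ i"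
        using L1i[OF i] a1 by (simp add: mult.assoc)
      have "(g * \<alpha> + cnj \<delta>) * (mat_adjoint D *\<^sub>v u1) $ i =
         ((mat_adjoint P1 *\<^sub>v u1) $ i + g * \<alpha> * (mat_adjoint D *\<^sub>v u1) $ i) - 
         ((mat_adjoint P1 *\<^sub>v u1) $ i - cnj \<delta> * (mat_adjoint D *\<^sub>v u1) $ i)"
        by (simp add: algebra_simps)
      also have "\<dots> = 0" by (subst h1, subst h2) simp
      finally have "(g * \<alpha> + cnj \<delta>) * (mat_adjoint D *\<^sub>v u1) $ i = 0" .
      then show ?thesis using cne by simp
    qed
    have "mat_adjoint D *\<^sub>v u1 \<in> carrier_vec n" using aDc dims by simp
    then have "mat_adjoint D *\<^sub>v u1 = 0\<^sub>v n" using e0 by (rule zero_vecI)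
    then have u10: "u1 = 0\<^sub>v n" using aDinj[OF dims(1)] by simp
    have "(\<alpha> \<cdot>\<^sub>v 0\<^sub>v n :: complex vec) = 0\<^sub>v n" by (rule eq_vecI) auto
    then have "u2 = 0\<^sub>v n" using u2e u10 by simp
    then show False using u0[OF u10] by simp
  qed
  have indep: "a = 0 \<and> b = 0" if h: "\<And>i. i < n \<Longrightarrow> a * v1 $ i + b * v2 $ i = 0" for a b
  proof (cases "b = 0")
    case True
    show ?thesis
    proof (rule ccontr)
      assume "\<not> (a = 0 \<and> b = 0)"
      then have "a \<noteq> 0" using True by simp
      then have "v1 = 0\<^sub>v n" using h True dims by (intro zero_vecI) auto
      then show False using caseA by blast
    qed
  next
    case False
    have "v2 $ i = (- a / b) * v1 $ i" if "i < n" for i using h[OF that] False by (simp add: field_simps eq_neg_iff_add_eq_0)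
    then show ?thesis using caseB by blast
  qed
  define \<theta> where "\<theta> = complex_of_real \<gamma>s / (\<mu>1 - \<mu>2)"
  define w where "w = v2 - \<theta> \<cdot>\<^sub>v v1"
  have wc: "w \<in> carrier_vec n" unfolding w_def using dims by simp
  have wi: "w $ i = v2 $ i - \<theta> * v1 $ i" if "i < n" for i unfolding w_def using that dims by simp
  have ind2: "a = 0 \<and> b = 0" if h: "\<And>i. i < n \<Longrightarrow> a * v1 $ i + b * w $ i = 0" for a b
  proof -
    have "(a - b * \<theta>) * v1 $ i + b * v2 $ i = 0" if "i < n" for i
    proof -
      have "(a - b * \<theta>) * v1 $ i + b * v2 $ i = a * v1 $ i + b * (v2 $ i - \<theta> * v1 $ i)" by (simp add: algebra_simps)
      also have "\<dots> = 0" using h[OF that] wi[OF that] by simp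
      finally show ?thesis .
    qed
    then have "a - b*\<theta> = 0 \<and> b = 0" using indep by blast
    then show ?thesis by simp
  qed
  have dist: "v1 \<noteq> w"
  proof
    assume vw: "v1 = w"
    have "(1 + \<theta>) * v1 $ i + (-1) * v2 $ i = 0" if "i < n" for i
    proof -
      have "(1 + \<theta>) * v1 $ i + (-1) * v2 $ i = v1 $ i - (v2 $ i - \<theta> * v1 $ i)" by (simp add: algebra_simps)
      also have "\<dots> = 0" using wi[OF that] vw by simp
      finally show ?thesis .
    qed
    then have "(-1::complex) = 0" using indep by blast
    then show False by simp
  qed
  interpret VS: vec_space "TYPE(complex)" n .
  have li: "VS.lin_indpt (set [v1, w])"
  proof (rule VS.finite_lin_indpt2)
    show "finite (set [v1,w])" by simp
    show "set [v1,w] \<subseteq> carrier_vec n" using dims wc by simp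
    fix a assume "True" and lc: "VS.lincomb a (set [v1,w]) = 0\<^sub>v n"
    have "VS.lincomb a (set [v1,w]) = VS.lincomb_list (\<lambda>i. a ([v1,w] ! i)) [v1,w]"
      by (rule VS.lincomb_as_lincomb_list_distinct) (use dims wc dist in auto)
    also have "\<dots> = a v1 \<cdot>\<^sub>v v1 + (a w \<cdot>\<^sub>v w + 0\<^sub>v n)" by simp
    finally have eq: "a v1 \<cdot>\<^sub>v v1 + (a w \<cdot>\<^sub>v w + 0\<^sub>v n) = 0\<^sub>v n" using lc by simp
    have "a v1 * v1 $ i + a w * w $ i = 0" if "i < n" for i
    proof -
      have "(a v1 \<cdot>\<^sub>v v1 + (a w \<cdot>\<^sub>v w + 0\<^sub>v n)) $ i = 0" using that by (simp only: eq index_zero_vec)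
      moreover have "(a v1 \<cdot>\<^sub>v v1 + (a w \<cdot>\<^sub>v w + 0\<^sub>v n)) $ i = a v1 * v1 $ i + a w * w $ i" using that dims wc by simp
      ultimately show ?thesis by simp
    qed
    then have "a v1 = 0 \<and> a w = 0" using ind2 by blast
    then show "\<forall>v\<in>set [v1,w]. a v = 0" by simp
  qed
  have "VS.rank (mat_of_cols n [v1, w]) = 2"
    by (rule VS.lin_indpt_full_rank[of _ 2]) (use li dist dims wc in auto)
  then show ?thesis unfolding w_def \<theta>_def .
qed

end
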